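(* If $\xi\in\mathfrak I(\mathrm{SU}(n))\subseteq\mathfrak I(\mathrm U(n))$, then $U_\xi(\mathrm{SU}(n))=U_\xi(\mathrm U(n))$.
   Context: For a compact matrix group $G\subseteq\mathrm U(n)$ with maximal torus Lie algebra $\mathfrak t$ (for $\mathrm U(n)$: diagonal skew-Hermitian matrices; for $\mathrm{SU}(n)$: traceless ones), $\mathfrak I(G)=(2\pi)^{-1}\exp^{-1}(e)\cap\mathfrak t$ and $\gamma_\xi(\lambda)=\exp(-\sqrt{-1}\ln(\lambda)\xi)$. $\Omega_{\mathrm{alg}}G$: loops $\gamma:S^1\to G$, $\gamma(1)=e$, with $\gamma,\gamma^{-1}$ having finite Fourier series; $\Lambda^+_{\mathrm{alg}}G^{\mathbb C}$: loops in $G^{\mathbb C}$ ($\mathrm{GL}(n,\mathbb C)$ resp. $\mathrm{SL}(n,\mathbb C)$) that are polynomials in $\lambda$ with polynomial inverse. $H^n_+$ is the closed span of $\lambda^ie_j$, $i\ge0$, in $L^2(S^1,\mathbb C^n)$. $U_\xi(G)=\{\gamma\in\Omega_{\mathrm{alg}}G:\gamma H^n_+=\Psi\gamma_\xi H^n_+\text{ for some }\Psi\in\Lambda^+_{\mathrm{alg}}G^{\mathbb C}\}$, regarded as a set of subspaces $\gamma H^n_+$ (equivalently loops). *)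

theory Defs
  imports "HOL-Analysis.Analysis"
begin

type_synonym 'n cmat = "complex^'n^'n"
type_synonym 'n cvec = "complex^'n"

text \<open>Laurent loops with finite Fourier series, represented by their (finitely
supported) Fourier coefficients.  The loop value at \<lambda> is
sum_k \<lambda>^k A_k.\<close>

definition fin_supp :: "(int \<Rightarrow> 'n::finite cmat) \<Rightarrow> bool" where
  "fin_supp A \<longleftrightarrow> finite {k. A k \<noteq> 0}"

definition leval :: "(int \<Rightarrow> 'n::finite cmat) \<Rightarrow> complex \<Rightarrow> 'n cmat" where
  "leval A z = (\<chi> i j. \<Sum>k\<in>{k. A k \<noteq> 0}. z powi k * (A k $ i $ j))"

definition cnj_transpose :: "'n::finite cmat \<Rightarrow> 'n cmat" where
  "cnj_transpose A = (\<chi> i j. cnj (A $ j $ i))"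

definition unitary_mat :: "'n::finite cmat \<Rightarrow> bool" where
  "unitary_mat A \<longleftrightarrow> A ** cnj_transpose A = mat 1 \<and> cnj_transpose A ** A = mat 1"

definition U_grp :: "'n::finite cmat \<Rightarrow> bool" where
  "U_grp A \<longleftrightarrow> unitary_mat A"

definition SU_grp :: "'n::finite cmat \<Rightarrow> bool" where
  "SU_grp A \<longleftrightarrow> unitary_mat A \<and> det A = 1"

definition GL_grp :: "'n::finite cmat \<Rightarrow> bool" where
  "GL_grp A \<longleftrightarrow> det A \<noteq> 0"

definition SL_grp :: "'n::finite cmat \<Rightarrow> bool" where
  "SL_grp A \<longleftrightarrow> det A = 1"

definition Omega_alg :: "('n::finite cmat \<Rightarrow> bool) \<Rightarrow> (int \<Rightarrow> 'n cmat) set" where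
  "Omega_alg G = {\<gamma>. fin_supp \<gamma> \<and>
      (\<forall>z. norm z = 1 \<longrightarrow> G (leval \<gamma> z)) \<and>
      leval \<gamma> 1 = mat 1 \<and>
      (\<exists>\<delta>. fin_supp \<delta> \<and> (\<forall>z. norm z = 1 \<longrightarrow>
            leval \<gamma> z ** leval \<delta> z = mat 1 \<and> leval \<delta> z ** leval \<gamma> z = mat 1))}"

definition Lplus_alg :: "('n::finite cmat \<Rightarrow> bool) \<Rightarrow> (int \<Rightarrow> 'n cmat) set" where
  "Lplus_alg Gc = {\<Psi>. fin_supp \<Psi> \<and> (\<forall>k<0. \<Psi> k = 0) \<and>
      (\<forall>z. norm z = 1 \<longrightarrow> Gc (leval \<Psi> z)) \<and>
      (\<exists>\<delta>. fin_supp \<delta> \<and> (\<forall>k<0. \<delta> k = 0) \<and> (\<forall>z. norm z = 1 \<longrightarrow>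
            leval \<Psi> z ** leval \<delta> z = mat 1 \<and> leval \<delta> z ** leval \<Psi> z = mat 1))}"

definition L2circ :: "(complex \<Rightarrow> 'n::finite cvec) set" where
  "L2circ = {f. (\<lambda>\<theta>. f (cis \<theta>)) \<in> borel_measurable lborel \<and>
      set_integrable lborel {0..2*pi} (\<lambda>\<theta>. (norm (f (cis \<theta>)))\<^sup>2)}"

definition l2dist :: "(complex \<Rightarrow> 'n::finite cvec) \<Rightarrow> (complex \<Rightarrow> 'n cvec) \<Rightarrow> real" where
  "l2dist f g = sqrt (LINT \<theta>:{0..2*pi}|lborel. (norm (f (cis \<theta>) - g (cis \<theta>)))\<^sup>2)"

text \<open>H^n_+: closure in L^2 of the complex span of lambda^i e_j, i >= 0.\<close>

definition Hplus :: "(complex \<Rightarrow> 'n::finite cvec) set" where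
  "Hplus = {f \<in> L2circ. \<forall>\<epsilon>>0. \<exists>(N::nat) c.
      l2dist f (\<lambda>z. \<Sum>i<N. (z ^ i) *s c i) < \<epsilon>}"

text \<open>Image M S of a subspace S of L^2 under the multiplication operator by a
matrix-valued function M (as a subset of L^2, closed under a.e. equality).\<close>

definition msub :: "(complex \<Rightarrow> 'n::finite cmat) \<Rightarrow> (complex \<Rightarrow> 'n cvec) set
     \<Rightarrow> (complex \<Rightarrow> 'n cvec) set" where
  "msub M S = {g \<in> L2circ. \<exists>f\<in>S. AE \<theta> in lborel. \<theta> \<in> {0..2*pi} \<longrightarrow>
      g (cis \<theta>) = M (cis \<theta>) *v f (cis \<theta>)}"

text \<open>The integral lattices I(U(n)) and I(SU(n)): diagonal skew-Hermitian
(resp. also traceless) xi with exp(2 pi xi) = e.  For diagonal xi the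
matrix exponential is the diagonal matrix of entrywise exponentials.\<close>

definition diag_mat :: "'n::finite cmat \<Rightarrow> bool" where
  "diag_mat \<xi> \<longleftrightarrow> (\<forall>i j. i \<noteq> j \<longrightarrow> \<xi> $ i $ j = 0)"

definition diag_exp :: "'n::finite cmat \<Rightarrow> 'n cmat" where
  "diag_exp \<xi> = (\<chi> i j. if i = j then exp (\<xi> $ i $ i) else 0)"

definition cscale :: "complex \<Rightarrow> 'n::finite cmat \<Rightarrow> 'n cmat" where
  "cscale c A = (\<chi> i j. c * A $ i $ j)"

definition t_U :: "'n::finite cmat set" where
  "t_U = {\<xi>. diag_mat \<xi> \<and> (\<forall>i. Re (\<xi> $ i $ i) = 0)}"

definition t_SU :: "'n::finite cmat set" where
  "t_SU = {\<xi>. \<xi> \<in> t_U \<and> (\<Sum>i\<in>UNIV. \<xi> $ i $ i) = 0}"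

definition I_U :: "'n::finite cmat set" where
  "I_U = {\<xi> \<in> t_U. diag_exp (cscale (2 * pi) \<xi>) = mat 1}"

definition I_SU :: "'n::finite cmat set" where
  "I_SU = {\<xi> \<in> t_SU. diag_exp (cscale (2 * pi) \<xi>) = mat 1}"

definition gamma_xi :: "'n::finite cmat \<Rightarrow> complex \<Rightarrow> 'n cmat" where
  "gamma_xi \<xi> z = diag_exp (cscale (- \<i> * Ln z) \<xi>)"

definition U_xi :: "('n::finite cmat \<Rightarrow> bool) \<Rightarrow> ('n cmat \<Rightarrow> bool) \<Rightarrow> 'n cmat
     \<Rightarrow> (int \<Rightarrow> 'n cmat) set" where
  "U_xi G Gc \<xi> = {\<gamma> \<in> Omega_alg G. \<exists>\<Psi>\<in>Lplus_alg Gc.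
      msub (leval \<gamma>) Hplus = msub (\<lambda>z. leval \<Psi> z ** gamma_xi \<xi> z) Hplus}"

definition U_xi_sub :: "('n::finite cmat \<Rightarrow> bool) \<Rightarrow> ('n cmat \<Rightarrow> bool) \<Rightarrow> 'n cmat
     \<Rightarrow> (complex \<Rightarrow> 'n cvec) set set" where
  "U_xi_sub G Gc \<xi> = (\<lambda>\<gamma>. msub (leval \<gamma>) Hplus) ` U_xi G Gc \<xi>"

end

theory Submission
  imports Defs "HOL-Computational_Algebra.Polynomial"
begin


definition lfun :: "(complex \<times> int) list \<Rightarrow> complex \<Rightarrow> complex" where
  "lfun xs z = (\<Sum>p\<leftarrow>xs. fst p * z powi snd p)"

definition lmul :: "(complex \<times> int) list \<Rightarrow> (complex \<times> int) list \<Rightarrow> (complex \<times> int) list" where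
  "lmul xs ys = concat (map (\<lambda>p. map (\<lambda>q. (fst p * fst q, snd p + snd q)) ys) xs)"

lemma lfun_Nil[simp]: "lfun [] z = 0" by (simp add: lfun_def)
lemma lfun_Cons[simp]: "lfun (p#xs) z = fst p * z powi snd p + lfun xs z" by (simp add: lfun_def)
lemma lfun_append[simp]: "lfun (xs@ys) z = lfun xs z + lfun ys z" by (simp add: lfun_def)

lemma lfun_map: "z \<noteq> 0 \<Longrightarrow> lfun (map (\<lambda>q. (fst p * fst q, snd p + snd q)) ys) z = fst p * z powi snd p * lfun ys z"
  by (induction ys) (auto simp: power_int_add algebra_simps)

lemma lfun_lmul: "z \<noteq> 0 \<Longrightarrow> lfun (lmul xs ys) z = lfun xs z * lfun ys z"
  by (induction xs) (auto simp: lmul_def lfun_map algebra_simps)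

definition lsp :: "int set \<Rightarrow> (complex \<Rightarrow> complex) \<Rightarrow> bool" where
  "lsp E g \<longleftrightarrow> (\<exists>xs. (\<forall>p\<in>set xs. snd p \<in> E) \<and> (\<forall>z. norm z = 1 \<longrightarrow> g z = lfun xs z))"

definition goodE :: "int set \<Rightarrow> bool" where "goodE E \<longleftrightarrow> 0 \<in> E \<and> (\<forall>a\<in>E. \<forall>b\<in>E. a + b \<in> E)"

lemma goodE_UNIV: "goodE UNIV" by (simp add: goodE_def)
lemma goodE_nonneg: "goodE {0..}" by (auto simp: goodE_def)

lemma lsp_cong: "lsp E f \<Longrightarrow> (\<And>z. norm z = 1 \<Longrightarrow> g z = f z) \<Longrightarrow> lsp E g"
  unfolding lsp_def by auto

lemma lsp_mono: "k \<in> E \<Longrightarrow> lsp E (\<lambda>z. c * z powi k)"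
  unfolding lsp_def by (rule exI[of _ "[(c,k)]"]) auto

lemma lsp_const: "goodE E \<Longrightarrow> lsp E (\<lambda>z. c)"
  using lsp_mono[of 0 E c] by (simp add: goodE_def)

lemma lsp_add: "lsp E f \<Longrightarrow> lsp E g \<Longrightarrow> lsp E (\<lambda>z. f z + g z)"
  unfolding lsp_def by (metis (no_types, lifting) Un_iff lfun_append set_append)

lemma lsp_mult: assumes "goodE E" "lsp E f" "lsp E g" shows "lsp E (\<lambda>z. f z * g z)"
proof -
  obtain xs where xs: "\<forall>p\<in>set xs. snd p \<in> E" "\<forall>z. norm z = 1 \<longrightarrow> f z = lfun xs z"
    using assms(2) by (auto simp: lsp_def)
  obtain ys where ys: "\<forall>p\<in>set ys. snd p \<in> E" "\<forall>z. norm z = 1 \<longrightarrow> g z = lfun ys z"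
    using assms(3) by (auto simp: lsp_def)
  show ?thesis unfolding lsp_def
  proof (intro exI[of _ "lmul xs ys"] conjI allI impI)
    show "\<forall>p\<in>set (lmul xs ys). snd p \<in> E" using xs(1) ys(1) assms(1)
      by (auto simp: lmul_def goodE_def)
    fix z :: complex assume "norm z = 1"
    then have "z \<noteq> 0" by auto
    then show "f z * g z = lfun (lmul xs ys) z" using xs ys \<open>norm z = 1\<close> by (simp add: lfun_lmul)
  qed
qed

lemma lsp_sum: assumes "goodE E" "finite S" "\<And>k. k \<in> S \<Longrightarrow> lsp E (f k)" shows "lsp E (\<lambda>z. \<Sum>k\<in>S. f k z)"
  using assms(2,3) by (induction S rule: finite_induct) (auto intro: lsp_add lsp_const assms(1))

lemma lsp_prod: assumes "goodE E" "finite S" "\<And>k. k \<in> S \<Longrightarrow> lsp E (f k)" shows "lsp E (\<lambda>z. \<Prod>k\<in>S. f k z)"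
  using assms(2,3) by (induction S rule: finite_induct) (auto intro: lsp_mult lsp_const assms(1))

lemma lsp_det:
  fixes A :: "complex \<Rightarrow> 'n::finite cmat"
  assumes "goodE E" "\<And>i j. lsp E (\<lambda>z. A z $ i $ j)"
  shows "lsp E (\<lambda>z. det (A z))"
  unfolding det_def
  by (intro lsp_sum lsp_mult lsp_prod lsp_const assms finite_permutations) auto

lemma lsp_matmul:
  fixes A B :: "complex \<Rightarrow> 'n::finite cmat"
  assumes "goodE E" "\<And>i j. lsp E (\<lambda>z. A z $ i $ j)" "\<And>i j. lsp E (\<lambda>z. B z $ i $ j)"
  shows "lsp E (\<lambda>z. (A z ** B z) $ i $ j)"
  unfolding matrix_matrix_mult_def
  by (simp, intro lsp_sum lsp_mult assms) auto

lemma lsp_leval: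
  fixes A :: "int \<Rightarrow> 'n::finite cmat"
  assumes "goodE E" "fin_supp A" "\<And>k. A k \<noteq> 0 \<Longrightarrow> k \<in> E"
  shows "lsp E (\<lambda>z. leval A z $ i $ j)"
  unfolding leval_def using assms
  by (simp, intro lsp_sum) (auto simp: fin_supp_def intro!: lsp_cong[OF lsp_mono[of _ E "A _ $ i $ j"]])



definition coefsum :: "(complex \<times> int) list \<Rightarrow> int \<Rightarrow> complex" where
  "coefsum xs m = (\<Sum>p\<leftarrow>xs. if snd p = m then fst p else 0)"

lemma coefsum_Cons[simp]: "coefsum (p#xs) m = (if snd p = m then fst p else 0) + coefsum xs m"
  by (simp add: coefsum_def)

lemma lfun_group: "finite K \<Longrightarrow> snd ` set xs \<subseteq> K \<Longrightarrow> lfun xs z = (\<Sum>m\<in>K. coefsum xs m * z powi m)"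
proof (induction xs)
  case Nil then show ?case by (simp add: coefsum_def)
next
  case (Cons p xs)
  then have IH: "lfun xs z = (\<Sum>m\<in>K. coefsum xs m * z powi m)" by auto
  have "snd p \<in> K" using Cons.prems by auto
  have "(\<Sum>m\<in>K. coefsum (p#xs) m * z powi m) = (\<Sum>m\<in>K. (if snd p = m then fst p * z powi m else 0)) + (\<Sum>m\<in>K. coefsum xs m * z powi m)"
    by (subst sum.distrib[symmetric]) (rule sum.cong; auto simp: algebra_simps)
  also have "(\<Sum>m\<in>K. (if snd p = m then fst p * z powi m else 0)) = fst p * z powi snd p"
    using \<open>snd p \<in> K\<close> Cons.prems(1) by (simp add: sum.delta)
  finally show ?case using IH by simp
qed

lemma pol_of_coefs:
  assumes "\<And>m. m < 0 \<Longrightarrow> coefsum xs m = 0"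
  shows "lsp {0..} (lfun xs)"
proof -
  define K where "K = snd ` set xs"
  have fK: "finite K" by (simp add: K_def)
  have "lfun xs z = (\<Sum>m\<in>K \<inter> {0..}. coefsum xs m * z powi m)" for z
  proof -
    have "lfun xs z = (\<Sum>m\<in>K. coefsum xs m * z powi m)" using lfun_group[OF fK] K_def by auto
    also have "\<dots> = (\<Sum>m\<in>K \<inter> {0..}. coefsum xs m * z powi m)"
      by (rule sum.mono_neutral_right) (use fK assms in auto)
    finally show ?thesis .
  qed
  moreover have "lsp {0..} (\<lambda>z. \<Sum>m\<in>K \<inter> {0..}. coefsum xs m * z powi m)"
    by (intro lsp_sum goodE_nonneg lsp_mono) (use fK in auto)
  ultimately show ?thesis by (simp add: lsp_cong)
qed

lemma lsp_poly: assumes "lsp {0..} g" shows "\<exists>p. \<forall>z. norm z = 1 \<longrightarrow> g z = poly p z"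
proof -
  obtain xs where xs: "\<forall>p\<in>set xs. snd p \<in> {0..}" "\<forall>z. norm z = 1 \<longrightarrow> g z = lfun xs z"
    using assms by (auto simp: lsp_def)
  have "\<forall>p\<in>set xs. snd p \<in> {0..} \<Longrightarrow> lfun xs z = poly (\<Sum>q\<leftarrow>xs. monom (fst q) (nat (snd q))) z" for z
  proof (induction xs)
    case (Cons a xs)
    then have "z powi snd a = z ^ nat (snd a)"
      by (metis atLeast_iff list.set_intros(1) nat_0_le power_int_of_nat)
    then show ?case using Cons by (simp add: poly_monom)
  qed simp
  then have h: "\<forall>p\<in>set xs. snd p \<in> {0..} \<Longrightarrow> lfun xs z = poly (\<Sum>q\<leftarrow>xs. monom (fst q) (nat (snd q))) z" for z .
  show ?thesis by (rule exI[of _ "\<Sum>q\<leftarrow>xs. monom (fst q) (nat (snd q))"]) (use xs h in auto)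
qed

lemma circle_infinite: "infinite {z::complex. norm z = 1}"
proof
  assume fin: "finite {z::complex. norm z = 1}"
  have "inj_on cis {0..pi}"
    unfolding inj_on_def
  proof (intro ballI impI)
    fix x y assume "x \<in> {0..pi}" "y \<in> {0..pi}" "cis x = cis y"
    then have "cos x = cos y" by (metis cis.sel(1))
    then show "x = y" using \<open>x \<in> {0..pi}\<close> \<open>y \<in> {0..pi}\<close> cos_inj_pi by auto
  qed
  moreover have "cis ` {0..pi} \<subseteq> {z. norm z = 1}" by auto
  ultimately have "finite {0..pi}" using fin finite_imageD finite_subset by metis
  then show False using infinite_Icc[of 0 pi] pi_gt_zero by auto
qed

lemma pol_unit_const:
  assumes "lsp {0..} f" "lsp {0..} g" "\<And>z. norm z = 1 \<Longrightarrow> f z * g z = 1"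
  shows "\<exists>c. \<forall>z. norm z = 1 \<longrightarrow> f z = c"
proof -
  obtain p where p: "\<forall>z. norm z = 1 \<longrightarrow> f z = poly p z" using lsp_poly[OF assms(1)] by auto
  obtain q where q: "\<forall>z. norm z = 1 \<longrightarrow> g z = poly q z" using lsp_poly[OF assms(2)] by auto
  have "{z::complex. norm z = 1} \<subseteq> {z. poly (p * q - 1) z = 0}"
    using p q assms(3) by auto
  then have "p * q - 1 = 0" using circle_infinite poly_roots_finite finite_subset by blast
  then have pq: "p * q = 1" by simp
  then have "p \<noteq> 0" "q \<noteq> 0" by auto
  then have "degree p = 0" using degree_mult_eq[of p q] pq by simp
  then obtain c where "p = [:c:]" by (rule degree_eq_zeroE)
  then show ?thesis using p by auto
qed



lemma continuous_on_smult[continuous_intros]: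
  fixes g :: "'a::topological_space \<Rightarrow> complex" and v :: "complex^'n"
  assumes "continuous_on S g"
  shows "continuous_on S (\<lambda>x. g x *s v)"
proof -
  have e: "(\<lambda>x. g x *s v) = (\<lambda>x. \<chi> j. g x * v $ j)" by (auto simp: vec_eq_iff)
  show ?thesis unfolding e by (intro continuous_on_vec_lambda continuous_on_mult assms continuous_on_const)
qed

lemma int_cis:
  fixes n :: int
  shows "set_integrable lborel {0..2*pi} (\<lambda>\<theta>. cis (of_int n * \<theta>))"
    and "(LINT \<theta>:{0..2*pi}|lborel. cis (of_int n * \<theta>)) = (if n = 0 then 2*pi else 0)"
proof -
  show si: "set_integrable lborel {0..2*pi} (\<lambda>\<theta>. cis (of_int n * \<theta>))"
    by (intro borel_integrable_atLeastAtMost' continuous_intros)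
  have eq: "(LINT \<theta>:{0..2*pi}|lborel. cis (of_int n * \<theta>)) = integral {0..2*pi} (\<lambda>\<theta>. cis (of_int n * \<theta>))"
    using set_borel_integral_eq_integral(2)[OF si] .
  show "(LINT \<theta>:{0..2*pi}|lborel. cis (of_int n * \<theta>)) = (if n = 0 then 2*pi else 0)"
  proof (cases "n = 0")
    case True
    then show ?thesis using eq by (simp add: scaleR_conv_of_real)
  next
    case False
    have d0: "((\<lambda>\<theta>. cis (of_int n * \<theta>)) has_vector_derivative (\<i> * of_int n * cis(of_int n * x))) (at x within {0..2*pi})" for x
      unfolding has_vector_derivative_def
      by (rule has_derivative_eq_rhs, (rule derivative_eq_intros)+) (auto simp: scaleR_conv_of_real algebra_simps)
    have d: "((\<lambda>\<theta>. cis (of_int n * \<theta>) / (\<i> * of_int n)) has_vector_derivative cis (of_int n * x)) (at x within {0..2*pi})" for x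
      using has_vector_derivative_mult_right[OF d0[of x], of "1 / (\<i> * of_int n)"] False
      by (simp add: field_simps)
    have "cis (of_int n * (2 * pi)) = 1"
      by (metis cis_2pi cis_power_int power_int_1_left)
    then show ?thesis using fundamental_theorem_of_calculus[OF _ d] eq False integral_unique
      by auto
  qed
qed

lemma sib_gen:
  fixes g :: "real \<Rightarrow> 'b::{banach,second_countable_topology}" and F :: "real \<Rightarrow> real"
  assumes "set_integrable lborel {0..2*pi} F" "g \<in> borel_measurable lborel"
    "\<And>\<theta>. norm (g \<theta>) \<le> F \<theta>"
  shows "set_integrable lborel {0..2*pi} g"
  by (rule set_integrable_bound[OF assms(1)])
     (use assms(2,3) in \<open>auto simp: set_borel_measurable_def intro: order_trans[OF _ abs_ge_self]\<close>)

lemma sq_dom: "\<bar>x::real\<bar> \<le> 1 + x\<^sup>2"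
proof (cases "\<bar>x\<bar> \<le> 1")
  case True then show ?thesis by (simp add: add_increasing2)
next
  case False
  then have "\<bar>x\<bar> * 1 \<le> \<bar>x\<bar> * \<bar>x\<bar>" by (intro mult_left_mono) auto
  then show ?thesis by (simp add: power2_eq_square)
qed

lemma norm_from_sq:
  fixes g :: "real \<Rightarrow> 'b::{banach,second_countable_topology}"
  assumes "set_integrable lborel {0..2*pi} (\<lambda>\<theta>. (norm (g \<theta>))\<^sup>2)" "g \<in> borel_measurable lborel"
  shows "set_integrable lborel {0..2*pi} (\<lambda>\<theta>. norm (g \<theta>))"
proof (rule sib_gen)
  show "set_integrable lborel {0..2*pi} (\<lambda>\<theta>. 1 + (norm (g \<theta>))\<^sup>2)"
    by (intro set_integral_add assms borel_integrable_atLeastAtMost' continuous_intros)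
  show "norm (norm (g \<theta>)) \<le> 1 + (norm (g \<theta>))\<^sup>2" for \<theta> using sq_dom[of "norm (g \<theta>)"] by simp
qed (use assms in auto)

lemma L2circ_props:
  fixes f :: "complex \<Rightarrow> 'n::finite cvec"
  assumes "f \<in> L2circ"
  shows "(\<lambda>\<theta>. f (cis \<theta>)) \<in> borel_measurable lborel"
    and "(\<lambda>\<theta>. f (cis \<theta>) $ i) \<in> borel_measurable lborel"
    and "set_integrable lborel {0..2*pi} (\<lambda>\<theta>. (norm (f (cis \<theta>)))\<^sup>2)"
    and "set_integrable lborel {0..2*pi} (\<lambda>\<theta>. norm (f (cis \<theta>)))"
proof -
  show fm: "(\<lambda>\<theta>. f (cis \<theta>)) \<in> borel_measurable lborel"
    and sq: "set_integrable lborel {0..2*pi} (\<lambda>\<theta>. (norm (f (cis \<theta>)))\<^sup>2)"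
    using assms by (auto simp: L2circ_def)
  show "(\<lambda>\<theta>. f (cis \<theta>) $ i) \<in> borel_measurable lborel"
    by (rule borel_measurable_continuous_on[OF _ fm]) (intro continuous_intros)
  show "set_integrable lborel {0..2*pi} (\<lambda>\<theta>. norm (f (cis \<theta>)))"
    by (rule norm_from_sq[OF sq fm])
qed



lemma cis_pow_int_mult: "cis \<theta> powi k * cis \<theta> ^ m = cis (of_int (k + int m) * \<theta>)"
  by (subst Complex.DeMoivre, subst cis_power_int, subst cis_mult) (simp add: algebra_simps)

lemma poly_coeff_zero:
  fixes c :: "nat \<Rightarrow> 'n::finite cvec"
  assumes "m > 0"
  shows "set_integrable lborel {0..2*pi} (\<lambda>\<theta>. (\<Sum>j<N. (cis \<theta> ^ j) *s c j) $ i * cis \<theta> ^ m)"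
    and "(LINT \<theta>:{0..2*pi}|lborel. (\<Sum>j<N. (cis \<theta> ^ j) *s c j) $ i * cis \<theta> ^ m) = 0"
proof -
  have eq: "(\<Sum>j<N. (cis \<theta> ^ j) *s c j) $ i * cis \<theta> ^ m = (\<Sum>j<N. c j $ i * cis (of_int (int j + int m) * \<theta>))" for \<theta>
    by (simp add: sum_component sum_distrib_right)
       (rule sum.cong[OF refl], subst Complex.DeMoivre, subst Complex.DeMoivre, simp add: cis_mult[symmetric] algebra_simps)
  show "set_integrable lborel {0..2*pi} (\<lambda>\<theta>. (\<Sum>j<N. (cis \<theta> ^ j) *s c j) $ i * cis \<theta> ^ m)"
    unfolding eq by (intro borel_integrable_atLeastAtMost' continuous_intros)
  have ii: "set_integrable lborel {0..2*pi} (\<lambda>\<theta>. c j $ i * cis (of_int (int j + int m) * \<theta>))" for j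
    by (intro set_integrable_mult_right int_cis(1))
  have "(LINT \<theta>:{0..2*pi}|lborel. (\<Sum>j<N. c j $ i * cis (of_int (int j + int m) * \<theta>))) =
        (\<Sum>j<N. LINT \<theta>:{0..2*pi}|lborel. c j $ i * cis (of_int (int j + int m) * \<theta>))"
    unfolding set_lebesgue_integral_def
    by (subst scaleR_sum_right, rule Bochner_Integration.integral_sum)
       (use ii in \<open>simp add: set_integrable_def\<close>)
  also have "\<dots> = 0"
  proof (rule sum.neutral, rule ballI)
    fix j assume "j \<in> {..<N}"
    have "int j + int m \<noteq> 0" using assms by simp
    then show "(LINT \<theta>:{0..2*pi}|lborel. c j $ i * cis (of_int (int j + int m) * \<theta>)) = 0"
      using int_cis(2)[of "int j + int m"] by (simp only: set_integral_mult_right) simp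
  qed
  finally show "(LINT \<theta>:{0..2*pi}|lborel. (\<Sum>j<N. (cis \<theta> ^ j) *s c j) $ i * cis \<theta> ^ m) = 0"
    by (simp only: eq)
qed



lemma amgm: assumes "e > 0" shows "(x::real) \<le> (e + x\<^sup>2 / e) / 2"
proof -
  have "0 \<le> (x - e)\<^sup>2" by simp
  then have "2 * e * x \<le> e * e + x\<^sup>2" by (simp add: power2_eq_square algebra_simps)
  then show ?thesis using assms by (simp add: field_simps power2_eq_square)
qed

lemma hplus_coeff:
  fixes f :: "complex \<Rightarrow> 'n::finite cvec"
  assumes f: "f \<in> Hplus" and m: "m > (0::nat)"
  shows "set_integrable lborel {0..2*pi} (\<lambda>\<theta>. f (cis \<theta>) $ i * cis \<theta> ^ m)"
    and "(LINT \<theta>:{0..2*pi}|lborel. f (cis \<theta>) $ i * cis \<theta> ^ m) = 0"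
proof -
  let ?I = "{0..2*pi}"
  have L2: "f \<in> L2circ" using f by (simp add: Hplus_def)
  note fp = L2circ_props[OF L2]
  have gm: "(\<lambda>\<theta>. f (cis \<theta>) $ i * cis \<theta> ^ m) \<in> borel_measurable lborel"
    using fp(2) by (intro borel_measurable_times) (auto intro!: borel_measurable_continuous_onI continuous_intros)
  show si: "set_integrable lborel ?I (\<lambda>\<theta>. f (cis \<theta>) $ i * cis \<theta> ^ m)"
    by (rule sib_gen[OF fp(4) gm]) (simp add: norm_mult norm_power Finite_Cartesian_Product.norm_nth_le)
  have bound: "norm (LINT \<theta>:?I|lborel. f (cis \<theta>) $ i * cis \<theta> ^ m) \<le> (2*pi + 1) * e" if e: "e > 0" for e
  proof -
    obtain N c where d: "l2dist f (\<lambda>z. \<Sum>j<N. (z ^ j) *s c j) < e" using f e by (auto simp: Hplus_def)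
    define P where "P = (\<lambda>z. \<Sum>j<N. (z ^ j) *s c j)"
    define h where "h = (\<lambda>\<theta>. f (cis \<theta>) - P (cis \<theta>))"
    have Pc: "continuous_on UNIV (\<lambda>\<theta>. P (cis \<theta>))"
      unfolding P_def by (intro continuous_intros)
    have Pm: "(\<lambda>\<theta>. P (cis \<theta>)) \<in> borel_measurable lborel"
      using borel_measurable_continuous_onI[OF Pc] by simp
    have hm: "h \<in> borel_measurable lborel" unfolding h_def using fp(1) Pm by simp
    have Psq: "set_integrable lborel ?I (\<lambda>\<theta>. (norm (P (cis \<theta>)))\<^sup>2)"
      by (intro borel_integrable_atLeastAtMost' continuous_intros continuous_on_subset[OF Pc]) auto
    have hsq: "set_integrable lborel ?I (\<lambda>\<theta>. (norm (h \<theta>))\<^sup>2)"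
    proof (rule sib_gen)
      show "set_integrable lborel ?I (\<lambda>\<theta>. 2 * (norm (f (cis \<theta>)))\<^sup>2 + 2 * (norm (P (cis \<theta>)))\<^sup>2)"
        by (intro set_integral_add set_integrable_mult_right fp(3) Psq)
      show "(\<lambda>\<theta>. (norm (h \<theta>))\<^sup>2) \<in> borel_measurable lborel" using hm by simp
      fix \<theta>
      have "norm (h \<theta>) \<le> norm (f (cis \<theta>)) + norm (P (cis \<theta>))" unfolding h_def by (rule norm_triangle_ineq4)
      then have "(norm (h \<theta>))\<^sup>2 \<le> (norm (f (cis \<theta>)) + norm (P (cis \<theta>)))\<^sup>2"
        by (intro power_mono) auto
      also have "\<dots> \<le> 2 * (norm (f (cis \<theta>)))\<^sup>2 + 2 * (norm (P (cis \<theta>)))\<^sup>2"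
        using sum_squares_bound[of "norm (f (cis \<theta>))" "norm (P (cis \<theta>))"]
        by (simp add: power2_eq_square algebra_simps)
      finally show "norm ((norm (h \<theta>))\<^sup>2) \<le> 2 * (norm (f (cis \<theta>)))\<^sup>2 + 2 * (norm (P (cis \<theta>)))\<^sup>2" by simp
    qed
    define D where "D = (LINT \<theta>:?I|lborel. (norm (h \<theta>))\<^sup>2)"
    have "sqrt D < e" using d by (simp add: l2dist_def D_def h_def P_def)
    then have D: "D < e\<^sup>2"
    proof (cases "D < 0")
      case True then show ?thesis using e by (metis less_le_trans not_le zero_le_power2)
    next
      case False
      then have "(sqrt D)\<^sup>2 = D" by simp
      moreover have "(sqrt D)\<^sup>2 < e\<^sup>2"
        using \<open>sqrt D < e\<close> False by (intro power_strict_mono) auto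
      ultimately show ?thesis by simp
    qed
    have hn: "set_integrable lborel ?I (\<lambda>\<theta>. norm (h \<theta>))" by (rule norm_from_sq[OF hsq hm])
    have him: "(\<lambda>\<theta>. h \<theta> $ i * cis \<theta> ^ m) \<in> borel_measurable lborel"
      by (intro borel_measurable_times borel_measurable_continuous_on[OF _ hm])
         (auto intro!: borel_measurable_continuous_onI continuous_intros)
    have hi: "set_integrable lborel ?I (\<lambda>\<theta>. h \<theta> $ i * cis \<theta> ^ m)"
      by (rule sib_gen[OF hn him]) (simp add: norm_mult norm_power Finite_Cartesian_Product.norm_nth_le)
    have Pi: "set_integrable lborel ?I (\<lambda>\<theta>. P (cis \<theta>) $ i * cis \<theta> ^ m)"
      and Pi0: "(LINT \<theta>:?I|lborel. P (cis \<theta>) $ i * cis \<theta> ^ m) = 0"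
      using poly_coeff_zero[OF m, where N=N and c=c and i=i] by (simp_all add: P_def)
    have split: "f (cis \<theta>) $ i * cis \<theta> ^ m = h \<theta> $ i * cis \<theta> ^ m + P (cis \<theta>) $ i * cis \<theta> ^ m" for \<theta>
      by (simp add: h_def algebra_simps)
    have "(LINT \<theta>:?I|lborel. f (cis \<theta>) $ i * cis \<theta> ^ m) = (LINT \<theta>:?I|lborel. h \<theta> $ i * cis \<theta> ^ m)"
      unfolding split using set_integral_add(2)[OF hi Pi] Pi0 by simp
    also have "norm \<dots> \<le> (LINT \<theta>:?I|lborel. norm (h \<theta> $ i * cis \<theta> ^ m))"
      by (rule set_integral_norm_bound[OF hi])
    also have "\<dots> \<le> (LINT \<theta>:?I|lborel. e / 2 + (norm (h \<theta>))\<^sup>2 * (1 / (2 * e)))"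
    proof (rule set_integral_mono)
      show "set_integrable lborel ?I (\<lambda>\<theta>. norm (h \<theta> $ i * cis \<theta> ^ m))"
        using set_integrable_norm[OF hi] .
      show "set_integrable lborel ?I (\<lambda>\<theta>. e / 2 + (norm (h \<theta>))\<^sup>2 * (1 / (2 * e)))"
        by (intro set_integral_add set_integrable_mult_left hsq borel_integrable_atLeastAtMost' continuous_intros)
      fix \<theta>
      have "norm (h \<theta> $ i * cis \<theta> ^ m) \<le> norm (h \<theta>)" by (simp add: norm_mult norm_power Finite_Cartesian_Product.norm_nth_le)
      also have "\<dots> \<le> (e + (norm (h \<theta>))\<^sup>2 / e) / 2" by (rule amgm[OF e])
      finally show "norm (h \<theta> $ i * cis \<theta> ^ m) \<le> e / 2 + (norm (h \<theta>))\<^sup>2 * (1 / (2 * e))"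
        by (simp add: field_simps)
    qed
    also have "\<dots> = 2 * pi * (e / 2) + D * (1 / (2 * e))"
    proof -
      have c: "set_integrable lborel ?I (\<lambda>\<theta>. e / 2)"
        by (intro borel_integrable_atLeastAtMost' continuous_intros)
      have "(LINT \<theta>:?I|lborel. e / 2 + (norm (h \<theta>))\<^sup>2 * (1 / (2 * e))) =
            (LINT \<theta>:?I|lborel. e / 2) + (LINT \<theta>:?I|lborel. (norm (h \<theta>))\<^sup>2 * (1 / (2 * e)))"
        by (rule set_integral_add(2)[OF c]) (intro set_integrable_mult_left hsq)
      also have "(LINT \<theta>:?I|lborel. e / 2) = 2 * pi * (e / 2)"
        by (subst set_integral_const) auto
      finally show ?thesis by (simp add: D_def)
    qed
    also have "\<dots> \<le> (2 * pi + 1) * e"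
    proof -
      have "D * (1 / (2 * e)) \<le> e\<^sup>2 * (1 / (2 * e))" using D e by (intro mult_right_mono) auto
      also have "\<dots> = e / 2" using e by (simp add: power2_eq_square)
      finally have X: "D * (1 / (2 * e)) \<le> e / 2" .
      have "2*pi*(e/2) = pi*e" "(2*pi+1)*e = 2*(pi*e) + e" by (simp_all add: algebra_simps)
      moreover have "pi * e \<ge> 0" using e pi_gt_zero by simp
      ultimately show ?thesis using X e by linarith
    qed
    finally show ?thesis .
  qed
  show "(LINT \<theta>:?I|lborel. f (cis \<theta>) $ i * cis \<theta> ^ m) = 0"
  proof (rule ccontr)
    let ?X = "(LINT \<theta>:?I|lborel. f (cis \<theta>) $ i * cis \<theta> ^ m)"
    assume "?X \<noteq> 0"
    then have pos: "norm ?X > 0" by simp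
    have ep: "norm ?X / (2 * (2*pi+1)) > 0" using pos pi_gt_zero by (intro divide_pos_pos) (auto intro: add_pos_pos)
    have "norm ?X \<le> (2*pi+1) * (norm ?X / (2 * (2*pi+1)))"
      by (rule bound[OF ep])
    also have "\<dots> = norm ?X / 2"
    proof -
      have gen: "c \<noteq> 0 \<Longrightarrow> c * (x / (2 * c)) = x / 2" for c x :: real by (simp add: field_simps)
      show ?thesis by (rule gen) (use pi_gt_zero in linarith)
    qed
    finally show False using pos by simp
  qed
qed



lemma lfun_cis: "finite K \<Longrightarrow> snd ` set xs \<subseteq> K \<Longrightarrow>
   lfun xs (cis \<theta>) = (\<Sum>m\<in>K. coefsum xs m * cis (of_int m * \<theta>))"
  by (simp add: lfun_group cis_power_int)

lemma fourier_pol: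
  fixes f :: "complex \<Rightarrow> 'n::finite cvec"
  assumes f: "f \<in> Hplus"
    and ae: "AE \<theta> in lborel. \<theta> \<in> {0..2*pi} \<longrightarrow> f (cis \<theta>) $ i = lfun xs (cis \<theta>)"
  shows "lsp {0..} (lfun xs)"
proof (rule pol_of_coefs)
  fix m :: int assume "m < 0"
  define k where "k = nat (- m)"
  have k: "k > 0" "int k = - m" using \<open>m < 0\<close> by (auto simp: k_def)
  define K where "K = insert m (snd ` set xs)"
  have fK: "finite K" by (simp add: K_def)
  have sK: "snd ` set xs \<subseteq> K" by (auto simp: K_def)
  have L2: "f \<in> L2circ" using f by (simp add: Hplus_def)
  have eq: "lfun xs (cis \<theta>) * cis \<theta> ^ k = (\<Sum>m'\<in>K. coefsum xs m' * cis (of_int (m' + int k) * \<theta>))" for \<theta>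
    unfolding lfun_cis[OF fK sK] sum_distrib_right
    by (rule sum.cong[OF refl]) (simp add: Complex.DeMoivre mult.assoc cis_mult algebra_simps)
  have "0 = (LINT \<theta>:{0..2*pi}|lborel. f (cis \<theta>) $ i * cis \<theta> ^ k)"
    using hplus_coeff(2)[OF f k(1)] by simp
  also have "\<dots> = (LINT \<theta>:{0..2*pi}|lborel. lfun xs (cis \<theta>) * cis \<theta> ^ k)"
  proof (rule set_lebesgue_integral_cong_AE)
    show "(\<lambda>\<theta>. f (cis \<theta>) $ i * cis \<theta> ^ k) \<in> borel_measurable lborel"
      using L2circ_props(2)[OF L2] by (intro borel_measurable_times) (auto intro!: borel_measurable_continuous_onI continuous_intros)
    show "(\<lambda>\<theta>. lfun xs (cis \<theta>) * cis \<theta> ^ k) \<in> borel_measurable lborel"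
    proof -
      have "(\<lambda>\<theta>. \<Sum>m'\<in>K. coefsum xs m' * cis (of_int (m' + int k) * \<theta>)) \<in> borel_measurable borel"
        by (intro borel_measurable_continuous_onI continuous_intros)
      then show ?thesis unfolding eq by simp
    qed
    show "AE \<theta>\<in>{0..2*pi} in lborel. f (cis \<theta>) $ i * cis \<theta> ^ k = lfun xs (cis \<theta>) * cis \<theta> ^ k"
      using ae by eventually_elim auto
  qed auto
  also have "\<dots> = (\<Sum>m'\<in>K. LINT \<theta>:{0..2*pi}|lborel. coefsum xs m' * cis (of_int (m' + int k) * \<theta>))"
  proof -
    have ii: "set_integrable lborel {0..2*pi} (\<lambda>\<theta>. coefsum xs m' * cis (of_int (m' + int k) * \<theta>))" for m'
      by (intro set_integrable_mult_right int_cis(1))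
    show ?thesis unfolding eq set_lebesgue_integral_def
      by (subst scaleR_sum_right, rule Bochner_Integration.integral_sum)
         (use ii in \<open>simp add: set_integrable_def\<close>)
  qed
  also have "\<dots> = (\<Sum>m'\<in>K. if m' = m then coefsum xs m' * (2 * pi) else 0)"
  proof (rule sum.cong[OF refl])
    fix m' assume "m' \<in> K"
    have "(LINT \<theta>:{0..2*pi}|lborel. coefsum xs m' * cis (of_int (m' + int k) * \<theta>)) =
          coefsum xs m' * (LINT \<theta>:{0..2*pi}|lborel. cis (of_int (m' + int k) * \<theta>))"
      by (rule set_integral_mult_right)
    also have "\<dots> = (if m' = m then coefsum xs m' * (2 * pi) else 0)"
      using int_cis(2)[of "m' + int k"] k by auto
    finally show "(LINT \<theta>:{0..2*pi}|lborel. coefsum xs m' * cis (of_int (m' + int k) * \<theta>)) =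
          (if m' = m then coefsum xs m' * (2 * pi) else 0)" .
  qed
  also have "\<dots> = coefsum xs m * (2 * pi)" using fK by (simp add: K_def)
  finally show "coefsum xs m = 0" using pi_gt_zero by simp
qed



lemma cont_smult2[continuous_intros]:
  fixes g :: "'a::topological_space \<Rightarrow> complex^'n"
  assumes "continuous_on S g"
  shows "continuous_on S (\<lambda>x. a *s g x)"
proof -
  have e: "(\<lambda>x. a *s g x) = (\<lambda>x. \<chi> j. a * g x $ j)" by (auto simp: vec_eq_iff)
  show ?thesis unfolding e by (intro continuous_on_vec_lambda continuous_on_mult assms continuous_on_const continuous_on_component)
qed

lemma norm_smult_vec: "norm (a *s (v::complex^'n)) = norm a * norm v"
proof -
  have "norm (a *s v) = sqrt (\<Sum>i\<in>UNIV. (norm a)\<^sup>2 * (norm (v $ i))\<^sup>2)"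
    by (simp add: norm_vec_def L2_set_def norm_mult power_mult_distrib)
  also have "\<dots> = sqrt ((norm a)\<^sup>2 * (\<Sum>i\<in>UNIV. (norm (v $ i))\<^sup>2))" by (simp add: sum_distrib_left)
  also have "\<dots> = norm a * norm v" by (simp add: real_sqrt_mult norm_vec_def L2_set_def)
  finally show ?thesis .
qed

lemma cont_L2:
  fixes g :: "complex \<Rightarrow> 'n::finite cvec"
  assumes "continuous_on UNIV (\<lambda>\<theta>. g (cis \<theta>))"
  shows "g \<in> L2circ"
proof -
  have "(\<lambda>\<theta>. g (cis \<theta>)) \<in> borel_measurable borel" by (rule borel_measurable_continuous_onI[OF assms])
  moreover have "set_integrable lborel {0..2*pi} (\<lambda>\<theta>. (norm (g (cis \<theta>)))\<^sup>2)"
    by (intro borel_integrable_atLeastAtMost' continuous_intros continuous_on_subset[OF assms]) auto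
  ultimately show ?thesis by (simp add: L2circ_def)
qed

lemma const_hplus: "(\<lambda>z. v) \<in> Hplus"
proof -
  have h: "l2dist (\<lambda>z. v) (\<lambda>z. \<Sum>i<1. (z ^ i) *s (\<lambda>_. v) i) = 0"
    by (simp add: l2dist_def)
  show ?thesis unfolding Hplus_def
  proof (intro CollectI conjI allI impI)
    show "(\<lambda>z::complex. v) \<in> L2circ" by (rule cont_L2) (intro continuous_intros)
    fix e :: real assume "e > 0"
    then show "\<exists>N c. l2dist (\<lambda>z. v) (\<lambda>z. \<Sum>i<N. (z ^ i) *s c i) < e"
      using h by (intro exI[of _ 1] exI[of _ "\<lambda>_. v"]) simp
  qed
qed

lemma hplus_scale:
  fixes f :: "complex \<Rightarrow> 'n::finite cvec"
  assumes f: "f \<in> Hplus" and a: "a \<noteq> 0"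
  shows "(\<lambda>z. a *s f z) \<in> Hplus"
proof -
  have L2: "f \<in> L2circ" using f by (simp add: Hplus_def)
  note fp = L2circ_props[OF L2]
  have m: "(\<lambda>\<theta>. a *s f (cis \<theta>)) \<in> borel_measurable lborel"
    by (rule borel_measurable_continuous_on[OF _ fp(1)]) (intro continuous_intros)
  have "set_integrable lborel {0..2*pi} (\<lambda>\<theta>. (norm a)\<^sup>2 * (norm (f (cis \<theta>)))\<^sup>2)"
    using fp(3) by (intro set_integrable_mult_right) auto
  then have "(\<lambda>z. a *s f z) \<in> L2circ" using m
    by (simp add: L2circ_def norm_smult_vec power_mult_distrib)
  moreover have "\<exists>N c. l2dist (\<lambda>z. a *s f z) (\<lambda>z. \<Sum>i<N. (z ^ i) *s c i) < e" if e: "e > 0" for e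
  proof -
    have "e / norm a > 0" using e a by simp
    then obtain N c where d: "l2dist f (\<lambda>z. \<Sum>i<N. (z ^ i) *s c i) < e / norm a"
      using f by (auto simp: Hplus_def)
    have eq: "a *s f z - (\<Sum>i<N. (z ^ i) *s (a *s c i)) = a *s (f z - (\<Sum>i<N. (z ^ i) *s c i))" for z
      by (simp add: vec_eq_iff sum_component sum_distrib_left algebra_simps)
    have "l2dist (\<lambda>z. a *s f z) (\<lambda>z. \<Sum>i<N. (z ^ i) *s (a *s c i)) = norm a * l2dist f (\<lambda>z. \<Sum>i<N. (z ^ i) *s c i)"
      unfolding l2dist_def eq norm_smult_vec power_mult_distrib set_integral_mult_right
      by (simp add: real_sqrt_mult)
    also have "\<dots> < e" using d a by (simp add: field_simps mult.commute)
    finally show ?thesis by (intro exI[of _ N] exI[of _ "\<lambda>i. a *s c i"])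
  qed
  ultimately show ?thesis by (simp add: Hplus_def)
qed

lemma cscale_mv: "cscale a X *v v = X *v (a *s v)"
  by (simp add: vec_eq_iff cscale_def matrix_vector_mult_def sum_distrib_left algebra_simps)

lemma msub_scale:
  fixes M :: "complex \<Rightarrow> 'n::finite cmat"
  assumes a: "a \<noteq> 0"
  shows "msub (\<lambda>z. cscale a (M z)) Hplus = msub M Hplus"
proof
  show "msub (\<lambda>z. cscale a (M z)) Hplus \<subseteq> msub M Hplus"
  proof
    fix g assume "g \<in> msub (\<lambda>z. cscale a (M z)) Hplus"
    then obtain f where g: "g \<in> L2circ" "f \<in> Hplus"
      "AE \<theta> in lborel. \<theta> \<in> {0..2*pi} \<longrightarrow> g (cis \<theta>) = cscale a (M (cis \<theta>)) *v f (cis \<theta>)"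
      by (auto simp: msub_def)
    have "(\<lambda>z. a *s f z) \<in> Hplus" using hplus_scale[OF g(2) a] .
    moreover have "AE \<theta> in lborel. \<theta> \<in> {0..2*pi} \<longrightarrow> g (cis \<theta>) = M (cis \<theta>) *v (a *s f (cis \<theta>))"
      using g(3) by eventually_elim (simp add: cscale_mv)
    ultimately show "g \<in> msub M Hplus" using g(1) unfolding msub_def
      by (auto intro!: bexI[where x="\<lambda>z. a *s f z"])
  qed
  have "msub M Hplus \<subseteq> msub (\<lambda>z. cscale a (M z)) Hplus"
  proof
    fix g assume "g \<in> msub M Hplus"
    then obtain f where g: "g \<in> L2circ" "f \<in> Hplus"
      "AE \<theta> in lborel. \<theta> \<in> {0..2*pi} \<longrightarrow> g (cis \<theta>) = M (cis \<theta>) *v f (cis \<theta>)"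
      by (auto simp: msub_def)
    have "(\<lambda>z. (1/a) *s f z) \<in> Hplus" using hplus_scale[OF g(2)] a by simp
    moreover have "AE \<theta> in lborel. \<theta> \<in> {0..2*pi} \<longrightarrow> g (cis \<theta>) = cscale a (M (cis \<theta>)) *v ((1/a) *s f (cis \<theta>))"
      using g(3) by eventually_elim (use a in \<open>simp add: cscale_mv\<close>)
    ultimately show "g \<in> msub (\<lambda>z. cscale a (M z)) Hplus" using g(1) unfolding msub_def
      by (auto intro!: bexI[where x="\<lambda>z. (1/a) *s f z"])
  qed
  then show "msub M Hplus \<subseteq> msub (\<lambda>z. cscale a (M z)) Hplus" .
qed



definition dg :: "('n::finite \<Rightarrow> int) \<Rightarrow> complex \<Rightarrow> 'n cmat" where
  "dg m z = (\<chi> i j. if i = j then z powi m i else 0)"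

lemma sum_delta_mult: fixes f :: "'a::finite \<Rightarrow> complex" shows "(\<Sum>k\<in>UNIV. (if i = k then c else 0) * f k) = c * f i"
proof -
  have "(\<lambda>k. (if i = k then c else 0) * f k) = (\<lambda>k. if k = i then c * f i else 0)" by (rule ext) auto
  then show ?thesis by (simp only:) (simp add: sum.delta)
qed

lemma dg_mult: "dg m z ** dg m' z = (\<chi> i j. if i = j then z powi m i * z powi m' i else 0)"
  by (simp add: vec_eq_iff matrix_matrix_mult_def dg_def sum_delta_mult)

lemma dg_mul: "z \<noteq> 0 \<Longrightarrow> dg m z ** dg (\<lambda>i. - m i) z = mat 1"
  "z \<noteq> 0 \<Longrightarrow> dg (\<lambda>i. - m i) z ** dg m z = mat 1"
  by (auto simp: dg_mult vec_eq_iff mat_def power_int_minus)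

lemma prod_powi: fixes z :: complex assumes "z \<noteq> 0" "finite S" shows "(\<Prod>i\<in>S. z powi m i) = z powi (\<Sum>i\<in>S. m i)"
  using assms(2) by (induction S rule: finite_induct) (use assms(1) in \<open>auto simp: power_int_add\<close>)

lemma det_dg: "z \<noteq> 0 \<Longrightarrow> (\<Sum>i\<in>UNIV. m i) = 0 \<Longrightarrow> det (dg m z) = 1"
  by (subst det_diagonal) (auto simp: dg_def prod_powi)

lemma lsp_dg: "lsp UNIV (\<lambda>z. dg m z $ i $ j)"
  by (cases "i = j") (auto simp: dg_def intro: lsp_cong[OF lsp_mono[of _ UNIV 1]] lsp_const goodE_UNIV)

lemma gamma_form:
  fixes \<xi> :: "'n::finite cmat"
  assumes "\<xi> \<in> I_SU"
  shows "\<exists>m. (\<Sum>i\<in>UNIV. m i) = 0 \<and> (\<forall>z. z \<noteq> 0 \<longrightarrow> gamma_xi \<xi> z = dg m z)"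
proof -
  have "\<exists>n::int. \<xi> $ i $ i = \<i> * of_int n" for i
  proof -
    have Re: "Re (\<xi> $ i $ i) = 0" using assms by (auto simp: I_SU_def t_SU_def t_U_def)
    have "diag_exp (cscale (2 * pi) \<xi>) $ i $ i = mat 1 $ i $ i" using assms by (simp add: I_SU_def)
    then have "exp (2 * pi * \<xi> $ i $ i) = 1" by (simp add: diag_exp_def cscale_def mat_def)
    then obtain n :: int where "Im (2 * pi * \<xi> $ i $ i) = of_int (2 * n) * pi" by (auto simp: exp_eq_1)
    then have "Im (\<xi> $ i $ i) = of_int n" using pi_gt_zero by (simp add: algebra_simps)
    then have "\<xi> $ i $ i = \<i> * of_int n" using Re by (simp add: complex_eq_iff)
    then show ?thesis by blast
  qed
  then obtain m where m: "\<And>i. \<xi> $ i $ i = \<i> * of_int (m i)" by metis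
  have "(\<Sum>i\<in>UNIV. \<xi> $ i $ i) = 0" using assms by (simp add: I_SU_def t_SU_def)
  then have "\<i> * of_int (\<Sum>i\<in>UNIV. m i) = 0" by (simp add: m sum_distrib_left)
  then have s: "(\<Sum>i\<in>UNIV. m i) = 0" by (metis of_int_eq_0_iff mult_eq_0_iff complex_i_not_zero)
  have "gamma_xi \<xi> z = dg m z" if "z \<noteq> 0" for z
  proof -
    have "exp ((- \<i> * Ln z) * (\<i> * of_int (m i))) = z powi m i" for i
    proof -
      have "(- \<i> * Ln z) * (\<i> * of_int (m i)) = of_int (m i) * Ln z" by (simp add: algebra_simps)
      then show ?thesis using that by (simp add: exp_power_int[symmetric])
    qed
    then show ?thesis by (simp add: vec_eq_iff gamma_xi_def diag_exp_def cscale_def dg_def m)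
  qed
  then show ?thesis using s by blast
qed

lemma mv_axis: "(A *v axis j 1) $ i = A $ i $ j"
  by (simp add: matrix_vector_mult_def axis_def if_distrib cong: if_cong)

lemma col_pol:
  fixes M :: "complex \<Rightarrow> 'n::finite cmat"
  assumes "lsp UNIV (\<lambda>z. M z $ i $ j)" "f \<in> Hplus"
    "AE \<theta> in lborel. \<theta> \<in> {0..2*pi} \<longrightarrow> f (cis \<theta>) = M (cis \<theta>) *v axis j 1"
  shows "lsp {0..} (\<lambda>z. M z $ i $ j)"
proof -
  obtain xs where xs: "\<forall>z. norm z = 1 \<longrightarrow> M z $ i $ j = lfun xs z"
    using assms(1) by (auto simp: lsp_def)
  have "AE \<theta> in lborel. \<theta> \<in> {0..2*pi} \<longrightarrow> f (cis \<theta>) $ i = lfun xs (cis \<theta>)"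
    using assms(3) by eventually_elim (simp add: mv_axis xs)
  then have "lsp {0..} (lfun xs)" by (rule fourier_pol[OF assms(2)])
  then show ?thesis by (rule lsp_cong) (simp add: xs)
qed



lemma cont_matmul[continuous_intros]:
  fixes X Y :: "'a::topological_space \<Rightarrow> 'n::finite cmat"
  assumes "continuous_on S X" "continuous_on S Y"
  shows "continuous_on S (\<lambda>t. X t ** Y t)"
  unfolding matrix_matrix_mult_def
  by (intro continuous_on_vec_lambda continuous_on_sum continuous_on_mult continuous_on_component assms)

lemma cont_mv[continuous_intros]:
  fixes X :: "'a::topological_space \<Rightarrow> 'n::finite cmat"
  assumes "continuous_on S X"
  shows "continuous_on S (\<lambda>t. X t *v v)"
  unfolding matrix_vector_mult_def
  by (intro continuous_on_vec_lambda continuous_on_sum continuous_on_mult continuous_on_component assms continuous_on_const)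

lemma leval_cis_cont: "continuous_on UNIV (\<lambda>\<theta>. leval A (cis \<theta>))"
  unfolding leval_def cis_power_int
  by (intro continuous_on_vec_lambda continuous_on_sum continuous_on_mult continuous_intros)

lemma dg_cis_cont: "continuous_on UNIV (\<lambda>\<theta>. dg m (cis \<theta>))"
  unfolding dg_def cis_power_int
proof (intro continuous_on_vec_lambda)
  fix i j :: 'a
  show "continuous_on UNIV (\<lambda>x. if i = j then cis (of_int (m i) * x) else 0)"
    by (cases "i = j") (auto intro!: continuous_intros)
qed

lemma det_one:
  fixes \<gamma> \<Psi> :: "int \<Rightarrow> 'n::finite cmat" and \<xi> :: "'n cmat"
  assumes \<xi>: "\<xi> \<in> I_SU" and \<gamma>: "\<gamma> \<in> Omega_alg U_grp" and \<Psi>: "\<Psi> \<in> Lplus_alg GL_grp"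
    and eq: "msub (leval \<gamma>) Hplus = msub (\<lambda>z. leval \<Psi> z ** gamma_xi \<xi> z) Hplus"
  shows "\<forall>z. norm z = 1 \<longrightarrow> det (leval \<gamma> z) = 1"
proof -
  obtain m where ms: "(\<Sum>i\<in>UNIV. m i) = 0" and mg: "\<And>z. z \<noteq> 0 \<Longrightarrow> gamma_xi \<xi> z = dg m z"
    using gamma_form[OF \<xi>] by blast
  define mi where "mi = (\<lambda>i. - m i)"
  have circ: "norm z = 1 \<Longrightarrow> z \<noteq> 0" for z :: complex by auto
  obtain d\<gamma> where d\<gamma>: "fin_supp d\<gamma>" "\<And>z. norm z = 1 \<Longrightarrow> leval \<gamma> z ** leval d\<gamma> z = mat 1 \<and> leval d\<gamma> z ** leval \<gamma> z = mat 1"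
    using \<gamma> by (auto simp: Omega_alg_def)
  have g1: "leval \<gamma> 1 = mat 1" and fg: "fin_supp \<gamma>" using \<gamma> by (auto simp: Omega_alg_def)
  obtain d\<Psi> where d\<Psi>: "fin_supp d\<Psi>" "\<forall>k<0. d\<Psi> k = 0" "\<And>z. norm z = 1 \<Longrightarrow> leval \<Psi> z ** leval d\<Psi> z = mat 1 \<and> leval d\<Psi> z ** leval \<Psi> z = mat 1"
    using \<Psi> by (auto simp: Lplus_alg_def)
  have f\<Psi>: "fin_supp \<Psi>" "\<forall>k<0. \<Psi> k = 0" using \<Psi> by (auto simp: Lplus_alg_def)
  have l\<gamma>: "lsp UNIV (\<lambda>z. leval \<gamma> z $ i $ j)" for i j by (rule lsp_leval[OF goodE_UNIV fg]) auto
  have ld\<gamma>: "lsp UNIV (\<lambda>z. leval d\<gamma> z $ i $ j)" for i j by (rule lsp_leval[OF goodE_UNIV d\<gamma>(1)]) auto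
  have l\<Psi>: "lsp UNIV (\<lambda>z. leval \<Psi> z $ i $ j)" for i j by (rule lsp_leval[OF goodE_UNIV f\<Psi>(1)]) auto
  have ld\<Psi>: "lsp UNIV (\<lambda>z. leval d\<Psi> z $ i $ j)" for i j by (rule lsp_leval[OF goodE_UNIV d\<Psi>(1)]) auto
  have p\<Psi>: "lsp {0..} (\<lambda>z. leval \<Psi> z $ i $ j)" for i j
    by (rule lsp_leval[OF goodE_nonneg f\<Psi>(1)]) (use f\<Psi>(2) in \<open>force\<close>)
  have pd\<Psi>: "lsp {0..} (\<lambda>z. leval d\<Psi> z $ i $ j)" for i j
    by (rule lsp_leval[OF goodE_nonneg d\<Psi>(1)]) (use d\<Psi>(2) in \<open>force\<close>)
  have e1: "axis j 1 = (\<lambda>z::complex. axis j (1::complex)) z" for j z by simp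
  define M where "M = (\<lambda>z. leval d\<gamma> z ** (leval \<Psi> z ** dg m z))"
  define M' where "M' = (\<lambda>z. dg mi z ** (leval d\<Psi> z ** leval \<gamma> z))"
  have pM: "lsp {0..} (\<lambda>z. M z $ i $ j)" for i j
  proof -
    define h where "h = (\<lambda>z. (leval \<Psi> z ** gamma_xi \<xi> z) *v axis j 1)"
    have hc: "(\<lambda>\<theta>. h (cis \<theta>)) = (\<lambda>\<theta>. (leval \<Psi> (cis \<theta>) ** dg m (cis \<theta>)) *v axis j 1)"
      by (rule ext) (simp add: h_def mg)
    have "h \<in> L2circ" by (rule cont_L2, unfold hc) (intro continuous_intros leval_cis_cont dg_cis_cont)
    then have "h \<in> msub (\<lambda>z. leval \<Psi> z ** gamma_xi \<xi> z) Hplus"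
      unfolding msub_def using const_hplus[of "axis j 1"] by (auto simp: h_def intro!: bexI[where x="\<lambda>z. axis j 1"])
    then have "h \<in> msub (leval \<gamma>) Hplus" using eq by simp
    then obtain f where f: "f \<in> Hplus" "AE \<theta> in lborel. \<theta> \<in> {0..2*pi} \<longrightarrow> h (cis \<theta>) = leval \<gamma> (cis \<theta>) *v f (cis \<theta>)"
      by (auto simp: msub_def)
    have "AE \<theta> in lborel. \<theta> \<in> {0..2*pi} \<longrightarrow> f (cis \<theta>) = M (cis \<theta>) *v axis j 1"
      using f(2)
    proof eventually_elim
      case (elim \<theta>)
      show ?case
      proof
        assume "\<theta> \<in> {0..2*pi}"
        then have "h (cis \<theta>) = leval \<gamma> (cis \<theta>) *v f (cis \<theta>)" using elim by simp
        then have "leval d\<gamma> (cis \<theta>) *v h (cis \<theta>) = f (cis \<theta>)"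
          using d\<gamma>(2)[of "cis \<theta>"] by (simp add: matrix_vector_mul_assoc)
        then show "f (cis \<theta>) = M (cis \<theta>) *v axis j 1"
          by (simp add: h_def M_def mg matrix_vector_mul_assoc)
      qed
    qed
    moreover have "lsp UNIV (\<lambda>z. M z $ i $ j)" unfolding M_def
      by (intro lsp_matmul goodE_UNIV l\<gamma> ld\<gamma> l\<Psi> lsp_dg)
    ultimately show ?thesis using col_pol f(1) by blast
  qed
  have pM': "lsp {0..} (\<lambda>z. M' z $ i $ j)" for i j
  proof -
    define g where "g = (\<lambda>z. leval \<gamma> z *v axis j 1)"
    have "g \<in> L2circ" unfolding g_def by (rule cont_L2) (intro continuous_intros leval_cis_cont)
    then have "g \<in> msub (leval \<gamma>) Hplus"
      unfolding msub_def using const_hplus[of "axis j 1"] by (auto simp: g_def intro!: bexI[where x="\<lambda>z. axis j 1"])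
    then have "g \<in> msub (\<lambda>z. leval \<Psi> z ** gamma_xi \<xi> z) Hplus" using eq by simp
    then obtain f where f: "f \<in> Hplus" "AE \<theta> in lborel. \<theta> \<in> {0..2*pi} \<longrightarrow> g (cis \<theta>) = (leval \<Psi> (cis \<theta>) ** gamma_xi \<xi> (cis \<theta>)) *v f (cis \<theta>)"
      by (auto simp: msub_def)
    have "AE \<theta> in lborel. \<theta> \<in> {0..2*pi} \<longrightarrow> f (cis \<theta>) = M' (cis \<theta>) *v axis j 1"
      using f(2)
    proof eventually_elim
      case (elim \<theta>)
      show ?case
      proof
        assume "\<theta> \<in> {0..2*pi}"
        then have gE: "g (cis \<theta>) = (leval \<Psi> (cis \<theta>) ** dg m (cis \<theta>)) *v f (cis \<theta>)" using elim by (simp add: mg)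
        have "(dg mi (cis \<theta>) ** leval d\<Psi> (cis \<theta>)) ** (leval \<Psi> (cis \<theta>) ** dg m (cis \<theta>)) =
              dg mi (cis \<theta>) ** ((leval d\<Psi> (cis \<theta>) ** leval \<Psi> (cis \<theta>)) ** dg m (cis \<theta>))"
          by (simp add: matrix_mul_assoc)
        also have "\<dots> = mat 1" using d\<Psi>(3)[of "cis \<theta>"] dg_mul(2)[of "cis \<theta>" m]
          by (simp add: mi_def)
        finally have "(dg mi (cis \<theta>) ** leval d\<Psi> (cis \<theta>)) *v g (cis \<theta>) = f (cis \<theta>)"
          using gE by (simp add: matrix_vector_mul_assoc)
        then show "f (cis \<theta>) = M' (cis \<theta>) *v axis j 1"
          by (simp add: g_def M'_def matrix_vector_mul_assoc matrix_mul_assoc)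
      qed
    qed
    moreover have "lsp UNIV (\<lambda>z. M' z $ i $ j)" unfolding M'_def
      by (intro lsp_matmul goodE_UNIV l\<gamma> ld\<Psi> lsp_dg)
    ultimately show ?thesis using col_pol f(1) by blast
  qed
  have dM: "lsp {0..} (\<lambda>z. det (M z))" by (intro lsp_det goodE_nonneg pM)
  have dM': "lsp {0..} (\<lambda>z. det (M' z))" by (intro lsp_det goodE_nonneg pM')
  have d\<Psi>p: "lsp {0..} (\<lambda>z. det (leval \<Psi> z))" by (intro lsp_det goodE_nonneg p\<Psi>)
  have dd\<Psi>p: "lsp {0..} (\<lambda>z. det (leval d\<Psi> z))" by (intro lsp_det goodE_nonneg pd\<Psi>)
  have inv\<Psi>: "det (leval \<Psi> z) * det (leval d\<Psi> z) = 1" if "norm z = 1" for z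
    using d\<Psi>(3)[OF that] by (metis det_I det_mul)
  have inv\<gamma>: "det (leval \<gamma> z) * det (leval d\<gamma> z) = 1" if "norm z = 1" for z
    using d\<gamma>(2)[OF that] by (metis det_I det_mul)
  have p1: "lsp {0..} (\<lambda>z. det (leval \<gamma> z))"
  proof (rule lsp_cong[OF lsp_mult[OF goodE_nonneg d\<Psi>p dM']])
    fix z :: complex assume z: "norm z = 1"
    have "det (M' z) = det (leval d\<Psi> z) * det (leval \<gamma> z)"
      using det_dg[OF circ[OF z], of mi] ms by (simp add: M'_def det_mul mi_def sum_negf)
    then show "det (leval \<gamma> z) = det (leval \<Psi> z) * det (M' z)"
      using inv\<Psi>[OF z] by (metis mult.assoc mult_1)
  qed
  have p2: "lsp {0..} (\<lambda>z. det (leval d\<gamma> z))"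
  proof (rule lsp_cong[OF lsp_mult[OF goodE_nonneg dM dd\<Psi>p]])
    fix z :: complex assume z: "norm z = 1"
    have "det (M z) = det (leval d\<gamma> z) * det (leval \<Psi> z)"
      using det_dg[OF circ[OF z], of m] ms by (simp add: M_def det_mul)
    then show "det (leval d\<gamma> z) = det (M z) * det (leval d\<Psi> z)"
      using inv\<Psi>[OF z] by (metis mult.assoc mult_1_right)
  qed
  obtain c where c: "\<And>z. norm z = 1 \<Longrightarrow> det (leval \<gamma> z) = c"
    using pol_unit_const[OF p1 p2 inv\<gamma>] by blast
  have "c = 1" using c[of 1] g1 by simp
  then show ?thesis using c by simp
qed



lemma cscale_zero_iff: "a \<noteq> 0 \<Longrightarrow> cscale a A = 0 \<longleftrightarrow> A = 0"
  by (auto simp: cscale_def vec_eq_iff)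

lemma leval_cscale: "a \<noteq> 0 \<Longrightarrow> leval (\<lambda>k. cscale a (A k)) z = cscale a (leval A z)"
  by (simp add: leval_def cscale_zero_iff cscale_def vec_eq_iff sum_distrib_left algebra_simps)

lemma cscale_mm: "cscale a A ** cscale b B = cscale (a * b) (A ** B)"
  by (simp add: cscale_def vec_eq_iff matrix_matrix_mult_def sum_distrib_left algebra_simps)

lemma cscale_mm_left: "cscale a A ** B = cscale a (A ** B)"
  by (simp add: cscale_def vec_eq_iff matrix_matrix_mult_def sum_distrib_left algebra_simps)

lemma cscale_1: "cscale 1 A = A" by (simp add: cscale_def vec_eq_iff)

lemma det_cscale: "det (cscale a (A::'n::finite cmat)) = a ^ CARD('n) * det A"
proof -
  have "cscale a A = mat a ** A"
    by (simp add: cscale_def vec_eq_iff matrix_matrix_mult_def mat_def sum_delta_mult)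
  moreover have "det (mat a :: 'n cmat) = a ^ CARD('n)"
    by (subst det_diagonal) (auto simp: mat_def)
  ultimately show ?thesis by (simp add: det_mul)
qed

lemma U_eq:
  fixes \<xi> :: "'n::finite cmat"
  assumes \<xi>: "\<xi> \<in> I_SU"
  shows "U_xi SU_grp SL_grp \<xi> = U_xi U_grp GL_grp \<xi>"
proof
  show "U_xi SU_grp SL_grp \<xi> \<subseteq> U_xi U_grp GL_grp \<xi>"
  proof -
    have "Omega_alg SU_grp \<subseteq> Omega_alg (U_grp :: 'n cmat \<Rightarrow> bool)"
      by (auto simp: Omega_alg_def SU_grp_def U_grp_def)
    moreover have "Lplus_alg SL_grp \<subseteq> Lplus_alg (GL_grp :: 'n cmat \<Rightarrow> bool)"
      by (auto simp: Lplus_alg_def SL_grp_def GL_grp_def)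
    ultimately show ?thesis unfolding U_xi_def by blast
  qed
  show "U_xi U_grp GL_grp \<xi> \<subseteq> U_xi SU_grp SL_grp \<xi>"
  proof
    fix \<gamma> assume "\<gamma> \<in> U_xi U_grp GL_grp \<xi>"
    then obtain \<Psi> where \<gamma>: "\<gamma> \<in> Omega_alg U_grp" and \<Psi>: "\<Psi> \<in> Lplus_alg GL_grp"
      and eq: "msub (leval \<gamma>) Hplus = msub (\<lambda>z. leval \<Psi> z ** gamma_xi \<xi> z) Hplus"
      by (auto simp: U_xi_def)
    have d1: "\<forall>z. norm z = 1 \<longrightarrow> det (leval \<gamma> z) = 1" by (rule det_one[OF \<xi> \<gamma> \<Psi> eq])
    have \<gamma>SU: "\<gamma> \<in> Omega_alg SU_grp" using \<gamma> d1 by (auto simp: Omega_alg_def SU_grp_def U_grp_def)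
    obtain d\<Psi> where d\<Psi>: "fin_supp d\<Psi>" "\<forall>k<0. d\<Psi> k = 0" "\<And>z. norm z = 1 \<Longrightarrow> leval \<Psi> z ** leval d\<Psi> z = mat 1 \<and> leval d\<Psi> z ** leval \<Psi> z = mat 1"
      using \<Psi> by (auto simp: Lplus_alg_def)
    have f\<Psi>: "fin_supp \<Psi>" "\<forall>k<0. \<Psi> k = 0" using \<Psi> by (auto simp: Lplus_alg_def)
    have p\<Psi>: "lsp {0..} (\<lambda>z. leval \<Psi> z $ i $ j)" for i j
      by (rule lsp_leval[OF goodE_nonneg f\<Psi>(1)]) (use f\<Psi>(2) in \<open>force\<close>)
    have pd\<Psi>: "lsp {0..} (\<lambda>z. leval d\<Psi> z $ i $ j)" for i j
      by (rule lsp_leval[OF goodE_nonneg d\<Psi>(1)]) (use d\<Psi>(2) in \<open>force\<close>)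
    have inv\<Psi>: "det (leval \<Psi> z) * det (leval d\<Psi> z) = 1" if "norm z = 1" for z
      using d\<Psi>(3)[OF that] by (metis det_I det_mul)
    obtain c0 where c0: "\<And>z. norm z = 1 \<Longrightarrow> det (leval \<Psi> z) = c0"
      using pol_unit_const[OF lsp_det[OF goodE_nonneg p\<Psi>] lsp_det[OF goodE_nonneg pd\<Psi>] inv\<Psi>] by blast
    have "c0 \<noteq> 0" using inv\<Psi>[of 1] c0[of 1] by auto
    define n where "n = CARD('n)"
    have n: "n > 0" by (simp add: n_def)
    define a where "a = exp (Ln (1 / c0) / of_nat n)"
    have an: "a ^ n = 1 / c0"
    proof -
      have "a ^ n = exp (of_nat n * (Ln (1 / c0) / of_nat n))" unfolding a_def by (rule exp_of_nat_mult[symmetric])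
      also have "\<dots> = exp (Ln (1 / c0))" using n by simp
      also have "\<dots> = 1 / c0" using \<open>c0 \<noteq> 0\<close> by simp
      finally show ?thesis .
    qed
    have a0: "a \<noteq> 0" by (simp add: a_def)
    define \<Psi>' where "\<Psi>' = (\<lambda>k. cscale a (\<Psi> k))"
    define d' where "d' = (\<lambda>k. cscale (1 / a) (d\<Psi> k))"
    have l\<Psi>': "leval \<Psi>' z = cscale a (leval \<Psi> z)" for z unfolding \<Psi>'_def by (rule leval_cscale[OF a0])
    have ld': "leval d' z = cscale (1/a) (leval d\<Psi> z)" for z unfolding d'_def by (rule leval_cscale) (use a0 in simp)
    have "\<Psi>' \<in> Lplus_alg SL_grp"
      unfolding Lplus_alg_def
    proof (intro CollectI conjI allI impI)
      show "fin_supp \<Psi>'" using f\<Psi>(1) a0 by (simp add: fin_supp_def \<Psi>'_def cscale_zero_iff)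
      show "\<Psi>' k = 0" if "k < 0" for k using f\<Psi>(2) that by (simp add: \<Psi>'_def cscale_def vec_eq_iff)
      show "SL_grp (leval \<Psi>' z)" if "norm z = 1" for z
        using c0[OF that] an \<open>c0 \<noteq> 0\<close> by (simp add: SL_grp_def l\<Psi>' det_cscale n_def)
      show "\<exists>\<delta>. fin_supp \<delta> \<and> (\<forall>k<0. \<delta> k = 0) \<and> (\<forall>z. norm z = 1 \<longrightarrow>
            leval \<Psi>' z ** leval \<delta> z = mat 1 \<and> leval \<delta> z ** leval \<Psi>' z = mat 1)"
      proof (intro exI[of _ d'] conjI allI impI)
        show "fin_supp d'" using d\<Psi>(1) a0 by (simp add: fin_supp_def d'_def cscale_zero_iff)
        show "d' k = 0" if "k < 0" for k using d\<Psi>(2) that by (simp add: d'_def cscale_def vec_eq_iff)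
        fix z :: complex assume z: "norm z = 1"
        show "leval \<Psi>' z ** leval d' z = mat 1" "leval d' z ** leval \<Psi>' z = mat 1"
          using d\<Psi>(3)[OF z] a0 by (simp_all add: l\<Psi>' ld' cscale_mm cscale_1)
      qed
    qed
    moreover have "msub (\<lambda>z. leval \<Psi>' z ** gamma_xi \<xi> z) Hplus = msub (leval \<gamma>) Hplus"
      unfolding l\<Psi>' cscale_mm_left msub_scale[OF a0] eq ..
    ultimately show "\<gamma> \<in> U_xi SU_grp SL_grp \<xi>" using \<gamma>SU unfolding U_xi_def by auto
  qed
qed

theorem mainTheorem7:
  fixes \<xi> :: "complex^'n::finite^'n"
  assumes "\<xi> \<in> I_SU"
  shows "U_xi_sub SU_grp SL_grp \<xi> = U_xi_sub U_grp GL_grp \<xi>"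
  unfolding U_xi_sub_def U_eq[OF assms] ..


end
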